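(* Let $\boldsymbol\pi$ be a prime of $H_{1,2,2}$ and $p$ a rational prime. Then $\boldsymbol\pi$ divides $p$ in $H_{1,2,2}$ (i.e. $p=\boldsymbol\pi\mathbf{a}$ or $p=\mathbf{a}\boldsymbol\pi$ for some $\mathbf{a}\in H_{1,2,2}$) if and only if $N(\boldsymbol\pi)=p$; moreover, if $N(\boldsymbol\pi)=p$ then $\boldsymbol\pi$ divides $p$ both on the left and on the right.
   Context: Let $\mathbf{i},\mathbf{j},\mathbf{k}$ be the standard quaternion units; $\overline{\mathbf{q}}$ is quaternion conjugation and $N(\mathbf{q})=\mathbf{q}\overline{\mathbf{q}}$. $H_{1,2,2}$ is the subring of the quaternions equal to the $\mathbb{Z}$-module generated by $\mathbf{v}_1=1$, $\mathbf{v}_2=\mathbf{i}$, $\mathbf{v}_3=\tfrac12(1+\mathbf{i}+\sqrt2\,\mathbf{j})$, $\mathbf{v}_4=\tfrac12(1+\mathbf{i}+\sqrt2\,\mathbf{k})$. A unit is an element invertible in $H_{1,2,2}$. A prime of $H_{1,2,2}$ is a nonzero nonunit $\boldsymbol\pi$ such that whenever $\boldsymbol\pi=\mathbf{a}\mathbf{b}$ in $H_{1,2,2}$, one of $\mathbf{a},\mathbf{b}$ is a unit. *)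

theory Defs
  imports Complex_Main "HOL-Computational_Algebra.Primes"
begin

text \<open>Real quaternions a + b i + c j + d k, with i^2 = j^2 = k^2 = ijk = -1.\<close>
datatype quat = Quat (Re: real) (Im1: real) (Im2: real) (Im3: real)

definition qmul :: "quat \<Rightarrow> quat \<Rightarrow> quat" (infixl "\<star>" 70) where
  "q \<star> r = Quat
     (Re q * Re r - Im1 q * Im1 r - Im2 q * Im2 r - Im3 q * Im3 r)
     (Re q * Im1 r + Im1 q * Re r + Im2 q * Im3 r - Im3 q * Im2 r)
     (Re q * Im2 r - Im1 q * Im3 r + Im2 q * Re r + Im3 q * Im1 r)
     (Re q * Im3 r + Im1 q * Im2 r - Im2 q * Im1 r + Im3 q * Re r)"

definition qconj :: "quat \<Rightarrow> quat" where
  "qconj q = Quat (Re q) (- Im1 q) (- Im2 q) (- Im3 q)"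

definition qreal :: "real \<Rightarrow> quat" where
  "qreal x = Quat x 0 0 0"

definition qN :: "quat \<Rightarrow> quat" where
  "qN q = q \<star> qconj q"

definition v1 :: quat where "v1 = Quat 1 0 0 0"
definition v2 :: quat where "v2 = Quat 0 1 0 0"
definition v3 :: quat where "v3 = Quat (1/2) (1/2) (sqrt 2 / 2) 0"
definition v4 :: quat where "v4 = Quat (1/2) (1/2) 0 (sqrt 2 / 2)"

definition qlin :: "int \<Rightarrow> int \<Rightarrow> int \<Rightarrow> int \<Rightarrow> quat" where
  "qlin a b c d = Quat
     (of_int a * Re v1 + of_int b * Re v2 + of_int c * Re v3 + of_int d * Re v4)
     (of_int a * Im1 v1 + of_int b * Im1 v2 + of_int c * Im1 v3 + of_int d * Im1 v4)
     (of_int a * Im2 v1 + of_int b * Im2 v2 + of_int c * Im2 v3 + of_int d * Im2 v4)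
     (of_int a * Im3 v1 + of_int b * Im3 v2 + of_int c * Im3 v3 + of_int d * Im3 v4)"

definition H122 :: "quat set" where
  "H122 = {qlin a b c d | a b c d. True}"

definition H_unit :: "quat \<Rightarrow> bool" where
  "H_unit u \<longleftrightarrow> u \<in> H122 \<and> (\<exists>v\<in>H122. u \<star> v = qreal 1 \<and> v \<star> u = qreal 1)"

definition H_prime :: "quat \<Rightarrow> bool" where
  "H_prime \<pi> \<longleftrightarrow> \<pi> \<in> H122 \<and> \<pi> \<noteq> qreal 0 \<and> \<not> H_unit \<pi> \<and>
     (\<forall>a\<in>H122. \<forall>b\<in>H122. \<pi> = a \<star> b \<longrightarrow> H_unit a \<or> H_unit b)"

end

theory Submission
  imports Defs
begin


lemma quat_eqI: "Re a = Re b \<Longrightarrow> Im1 a = Im1 b \<Longrightarrow> Im2 a = Im2 b \<Longrightarrow> Im3 a = Im3 b \<Longrightarrow> a = b"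
  by (cases a; cases b) auto

instantiation quat :: ring_1
begin
definition zero_quat_def: "0 = Quat 0 0 0 0"
definition one_quat_def: "1 = Quat 1 0 0 0"
definition plus_quat_def: "a + b = Quat (Re a + Re b) (Im1 a + Im1 b) (Im2 a + Im2 b) (Im3 a + Im3 b)"
definition minus_quat_def: "a - b = Quat (Re a - Re b) (Im1 a - Im1 b) (Im2 a - Im2 b) (Im3 a - Im3 b)"
definition uminus_quat_def: "- a = Quat (- Re a) (- Im1 a) (- Im2 a) (- Im3 a)"
definition times_quat_def: "a * b = a \<star> b"
instance
  by standard (auto intro!: quat_eqI simp: zero_quat_def one_quat_def plus_quat_def minus_quat_def
      uminus_quat_def times_quat_def qmul_def algebra_simps)
end

lemma quat_simps[simp]:
  "Re 0 = 0" "Im1 0 = 0" "Im2 0 = 0" "Im3 0 = 0"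
  "Re 1 = 1" "Im1 1 = 0" "Im2 1 = 0" "Im3 1 = 0"
  "Re (a + b) = Re a + Re b" "Im1 (a + b) = Im1 a + Im1 b" "Im2 (a + b) = Im2 a + Im2 b" "Im3 (a + b) = Im3 a + Im3 b"
  "Re (a - b) = Re a - Re b" "Im1 (a - b) = Im1 a - Im1 b" "Im2 (a - b) = Im2 a - Im2 b" "Im3 (a - b) = Im3 a - Im3 b"
  "Re (- a) = - Re a" "Im1 (- a) = - Im1 a" "Im2 (- a) = - Im2 a" "Im3 (- a) = - Im3 a"
  "Re (a * b) = Re a * Re b - Im1 a * Im1 b - Im2 a * Im2 b - Im3 a * Im3 b"
  "Im1 (a * b) = Re a * Im1 b + Im1 a * Re b + Im2 a * Im3 b - Im3 a * Im2 b"
  "Im2 (a * b) = Re a * Im2 b - Im1 a * Im3 b + Im2 a * Re b + Im3 a * Im1 b"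
  "Im3 (a * b) = Re a * Im3 b + Im1 a * Im2 b - Im2 a * Im1 b + Im3 a * Re b"
  "Re (qconj a) = Re a" "Im1 (qconj a) = - Im1 a" "Im2 (qconj a) = - Im2 a" "Im3 (qconj a) = - Im3 a"
  "Re (qreal r) = r" "Im1 (qreal r) = 0" "Im2 (qreal r) = 0" "Im3 (qreal r) = 0"
  by (simp_all add: zero_quat_def one_quat_def plus_quat_def minus_quat_def
      uminus_quat_def times_quat_def qmul_def qconj_def qreal_def)

lemma qmul_eq: "a \<star> b = a * b" by (simp add: times_quat_def)
lemma qreal_0: "qreal 0 = 0" by (rule quat_eqI) simp_all
lemma qreal_1: "qreal 1 = 1" by (rule quat_eqI) simp_all
lemma qreal_mult: "qreal (r * s) = qreal r * qreal s" by (rule quat_eqI) simp_all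
lemma qreal_comm: "qreal r * q = q * qreal r" by (rule quat_eqI) simp_all
lemma qreal_left: "x * (qreal r * y) = qreal r * (x * y)"
  by (metis mult.assoc qreal_comm)
lemma qreal_left2: "x * qreal r * y = qreal r * (x * y)"
  by (metis mult.assoc qreal_comm)
lemma qreal_inj: "qreal r = qreal s \<longleftrightarrow> r = s" by (metis quat.sel(1) qreal_def)

definition nr :: "quat \<Rightarrow> real" where
  "nr q = Re q ^ 2 + Im1 q ^ 2 + Im2 q ^ 2 + Im3 q ^ 2"

lemma mul_conj: "q * qconj q = qreal (nr q)"
  by (rule quat_eqI) (simp_all add: nr_def power2_eq_square algebra_simps)
lemma conj_mul: "qconj q * q = qreal (nr q)"
  by (rule quat_eqI) (simp_all add: nr_def power2_eq_square algebra_simps)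
lemma qN_eq: "qN q = qreal (nr q)" by (simp add: qN_def qmul_eq mul_conj)
lemma nr_mult: "nr (a * b) = nr a * nr b"
  by (simp add: nr_def power2_eq_square algebra_simps)
lemma nr_nonneg: "nr q \<ge> 0" by (simp add: nr_def)
lemma nr_zero: "nr q = 0 \<longleftrightarrow> q = 0"
proof
  assume "nr q = 0"
  moreover have "Re q ^ 2 \<ge> 0" "Im1 q ^ 2 \<ge> 0" "Im2 q ^ 2 \<ge> 0" "Im3 q ^ 2 \<ge> 0" by simp_all
  ultimately have "Re q ^ 2 = 0 \<and> Im1 q ^ 2 = 0 \<and> Im2 q ^ 2 = 0 \<and> Im3 q ^ 2 = 0"
    unfolding nr_def by linarith
  then have "Re q = 0 \<and> Im1 q = 0 \<and> Im2 q = 0 \<and> Im3 q = 0" by simp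
  then show "q = 0" by (intro quat_eqI) auto
qed (simp add: nr_def)
lemma nr_qreal: "nr (qreal r) = r^2" by (simp add: nr_def)
lemma conj_conj_mult: "qconj (a * b) = qconj b * qconj a"
  by (rule quat_eqI) (simp_all add: algebra_simps)

lemma qlin_eq: "qlin a b c d = Quat (a + (c+d)/2) (b + (c+d)/2) (c * sqrt 2/2) (d * sqrt 2/2)"
  by (simp add: qlin_def v1_def v2_def v3_def v4_def field_simps)

lemma qlin_mul: "qlin a b c d * qlin a' b' c' d' =
  qlin (a*a' - b*b' - b*c' - d*b' - c*c' - d*d' - d*c')
       (a*b' + b*a' + c*b' + b*d' + c*d' - d*c')
       (a*c' - b*d' + c*a' + d*b' + c*c' + d*c')
       (a*d' + b*c' - c*b' + d*a' + d*d' + d*c')"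
  unfolding qlin_eq times_quat_def qmul_def
  by (simp add: field_simps)

lemma qlin_add: "qlin a b c d + qlin a' b' c' d' = qlin (a+a') (b+b') (c+c') (d+d')"
  by (rule quat_eqI) (simp_all add: qlin_eq field_simps)
lemma qlin_neg: "- qlin a b c d = qlin (-a) (-b) (-c) (-d)"
  by (rule quat_eqI) (simp_all add: qlin_eq field_simps)
lemma qlin_conj: "qconj (qlin a b c d) = qlin (a+c+d) (-b) (-c) (-d)"
  by (rule quat_eqI) (simp_all add: qlin_eq field_simps)
lemma qlin_int: "qreal (of_int n) = qlin n 0 0 0"
  by (rule quat_eqI) (simp_all add: qlin_eq)
lemma nr_qlin: "nr (qlin a b c d) = of_int (a^2 + b^2 + (c+d)*(a+b) + c^2 + c*d + d^2)"
  by (simp add: nr_def qlin_eq power2_eq_square field_simps)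

lemma H_iff: "h \<in> H122 \<longleftrightarrow> (\<exists>a b c d. h = qlin a b c d)"
  by (simp add: H122_def)

lemma H_mult: "a \<in> H122 \<Longrightarrow> b \<in> H122 \<Longrightarrow> a * b \<in> H122"
  unfolding H_iff by (auto simp: qlin_mul) blast
lemma H_add: "a \<in> H122 \<Longrightarrow> b \<in> H122 \<Longrightarrow> a + b \<in> H122"
  unfolding H_iff by (auto simp: qlin_add) blast
lemma H_neg: "a \<in> H122 \<Longrightarrow> - a \<in> H122"
  unfolding H_iff by (auto simp: qlin_neg) blast
lemma H_diff: "a \<in> H122 \<Longrightarrow> b \<in> H122 \<Longrightarrow> a - b \<in> H122"
  using H_add[of a "- b"] H_neg[of b] by simp
lemma H_conj: "a \<in> H122 \<Longrightarrow> qconj a \<in> H122"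
  unfolding H_iff by (auto simp: qlin_conj) blast
lemma H_int: "qreal (of_int n) \<in> H122"
  unfolding H_iff qlin_int by auto
lemma H_0: "0 \<in> H122" using H_int[of 0] by (simp add: qreal_0)
lemma H_1: "1 \<in> H122" using H_int[of 1] by (simp add: qreal_1)
lemma H_nr: "h \<in> H122 \<Longrightarrow> \<exists>n::nat. nr h = real n"
proof -
  assume "h \<in> H122"
  then obtain a b c d where h: "h = qlin a b c d" by (auto simp: H_iff)
  let ?k = "a^2 + b^2 + (c+d)*(a+b) + c^2 + c*d + d^2"
  have "of_int ?k \<ge> (0::real)" using nr_nonneg[of h] by (simp add: h nr_qlin)
  then have "?k \<ge> 0" by (simp only: of_int_0_le_iff)
  then have "nr h = real (nat ?k)" by (simp add: h nr_qlin)
  then show ?thesis by blast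
qed
lemma H_Im2: "h \<in> H122 \<Longrightarrow> \<exists>c::int. Im2 h = c * sqrt 2 / 2"
  by (auto simp: H_iff qlin_eq)

lemma round_err: "\<bar>v - of_int \<lfloor>v + 1/2\<rfloor>\<bar> \<le> (1/2::real)"
  by linarith

lemma round_sq: "(v - of_int \<lfloor>v + 1/2\<rfloor>)^2 \<le> (1/4::real)"
proof -
  have "\<bar>v - of_int \<lfloor>v + 1/2\<rfloor>\<bar>^2 \<le> (1/2)^2"
    using round_err[of v] by (intro power_mono) auto
  then show ?thesis by (simp add: power2_eq_square)
qed

lemma approx: "\<exists>q\<in>H122. nr (t - q) < 1"
proof -
  define c where "c = \<lfloor>Im2 t * sqrt 2 + 1/2\<rfloor>"
  define d where "d = \<lfloor>Im3 t * sqrt 2 + 1/2\<rfloor>"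
  define a where "a = \<lfloor>(Re t - (c+d)/2) + 1/2\<rfloor>"
  define b where "b = \<lfloor>(Im1 t - (c+d)/2) + 1/2\<rfloor>"
  have s: "sqrt 2 * sqrt 2 = (2::real)" by simp
  have e2: "Im2 t - c * sqrt 2 / 2 = (sqrt 2 / 2) * (Im2 t * sqrt 2 - c)"
    using s by (simp add: algebra_simps)
  have e3: "Im3 t - d * sqrt 2 / 2 = (sqrt 2 / 2) * (Im3 t * sqrt 2 - d)"
    using s by (simp add: algebra_simps)
  have "(Im2 t - c * sqrt 2 / 2)^2 = (1/2) * (Im2 t * sqrt 2 - c)^2"
    unfolding e2 by (simp add: power_mult_distrib power_divide)
  also have "\<dots> \<le> 1/8" using round_sq[of "Im2 t * sqrt 2"] unfolding c_def by simp
  finally have i2: "(Im2 t - c * sqrt 2 / 2)^2 \<le> 1/8" .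
  have "(Im3 t - d * sqrt 2 / 2)^2 = (1/2) * (Im3 t * sqrt 2 - d)^2"
    unfolding e3 by (simp add: power_mult_distrib power_divide)
  also have "\<dots> \<le> 1/8" using round_sq[of "Im3 t * sqrt 2"] unfolding d_def by simp
  finally have i3: "(Im3 t - d * sqrt 2 / 2)^2 \<le> 1/8" .
  have i0: "(Re t - (a + (c+d)/2))^2 \<le> 1/4"
    using round_sq[of "Re t - (c+d)/2"] unfolding a_def by (simp add: algebra_simps)
  have i1: "(Im1 t - (b + (c+d)/2))^2 \<le> 1/4"
    using round_sq[of "Im1 t - (c+d)/2"] unfolding b_def by (simp add: algebra_simps)
  have "nr (t - qlin a b c d) = (Re t - (a + (c+d)/2))^2 + (Im1 t - (b + (c+d)/2))^2
     + (Im2 t - c * sqrt 2 / 2)^2 + (Im3 t - d * sqrt 2 / 2)^2"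
    by (simp add: nr_def qlin_eq)
  also have "\<dots> < 1" using i0 i1 i2 i3 by linarith
  finally have "nr (t - qlin a b c d) < 1" .
  moreover have "qlin a b c d \<in> H122" unfolding H_iff by blast
  ultimately show ?thesis by blast
qed

lemma division: assumes "\<alpha> \<in> H122" "\<beta> \<in> H122" "\<beta> \<noteq> 0"
  shows "\<exists>q\<in>H122. nr (\<alpha> - q * \<beta>) < nr \<beta>"
proof -
  have nb: "nr \<beta> > 0" using assms(3) nr_zero nr_nonneg by (metis less_eq_real_def)
  define t where "t = \<alpha> * qconj \<beta> * qreal (1 / nr \<beta>)"
  obtain q where q: "q \<in> H122" "nr (t - q) < 1" using approx by blast
  have "t * \<beta> = \<alpha> * (qconj \<beta> * \<beta>) * qreal (1 / nr \<beta>)"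
    unfolding t_def by (simp add: mult.assoc qreal_comm)
  also have "\<dots> = \<alpha>" using nb by (simp add: conj_mul mult.assoc qreal_mult[symmetric] qreal_1)
  finally have tb: "t * \<beta> = \<alpha>" .
  have "\<alpha> - q * \<beta> = (t - q) * \<beta>" using tb by (simp add: algebra_simps)
  then have "nr (\<alpha> - q * \<beta>) = nr (t - q) * nr \<beta>" by (simp add: nr_mult)
  also have "\<dots> < nr \<beta>" using q(2) nb by simp
  finally show ?thesis using q(1) by blast
qed

lemma unit_nr: "H_unit u \<Longrightarrow> nr u = 1"
proof -
  assume "H_unit u"
  then obtain v where uv: "u \<in> H122" "v \<in> H122" "u * v = 1" unfolding H_unit_def by (auto simp: qmul_eq qreal_1)
  obtain m n :: nat where mn: "nr u = m" "nr v = n" using H_nr uv by metis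
  have "nr u * nr v = 1" using uv(3) nr_mult[of u v] by (simp add: nr_def)
  then have "m * n = 1" using mn by (metis of_nat_1 of_nat_eq_iff of_nat_mult)
  then show ?thesis using mn by simp
qed

lemma nr_unit: "h \<in> H122 \<Longrightarrow> nr h = 1 \<Longrightarrow> H_unit h"
  unfolding H_unit_def
  by (intro conjI bexI[of _ "qconj h"]) (auto simp: qmul_eq mul_conj conj_mul H_conj)



lemma sq_inj_aux:
  fixes P x x' :: int
  assumes "prime P" "0 \<le> x" "0 \<le> x'" "2 * x < P" "2 * x' < P" "P dvd (x - x') * (x + x')"
  shows "x = x'"
proof -
  have "P dvd x - x' \<or> P dvd x + x'" using assms(1,6) prime_dvd_mult_iff by blast
  then show ?thesis
  proof
    assume h: "P dvd x - x'"
    show ?thesis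
    proof (rule ccontr)
      assume "x \<noteq> x'"
      then have "\<bar>P\<bar> \<le> \<bar>x - x'\<bar>" using dvd_imp_le_int[OF _ h] by simp
      then show False using assms by linarith
    qed
  next
    assume h: "P dvd x + x'"
    show ?thesis
    proof (rule ccontr)
      assume "x \<noteq> x'"
      then have "x + x' \<noteq> 0" using assms by linarith
      then have "\<bar>P\<bar> \<le> \<bar>x + x'\<bar>" using dvd_imp_le_int[OF _ h] by simp
      then show False using assms by linarith
    qed
  qed
qed

lemma pigeon:
  fixes p :: nat
  assumes "prime p" "odd p"
  shows "\<exists>x y :: int. int p dvd x^2 + y^2 + 1"
proof -
  define P where "P = int p"
  have pP: "prime P" using assms by (simp add: P_def)
  have P2: "P \<ge> 2" using prime_ge_2_int[OF pP] .
  have Podd: "odd P" using assms by (simp add: P_def)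
  define m where "m = (P - 1) div 2"
  obtain k where k: "P = 2 * k + 1" using Podd by (auto elim: oddE)
  have m2: "2 * m = P - 1" unfolding m_def k by simp
  define S where "S = {0..m}"
  define f where "f x = x^2 mod P" for x :: int
  define g where "g y = (-1 - y^2) mod P" for y :: int
  have injf: "inj_on f S"
  proof (rule inj_onI)
    fix x x' assume "x \<in> S" "x' \<in> S" "f x = f x'"
    then have b: "0 \<le> x" "0 \<le> x'" "2*x < P" "2 * x' < P"
      unfolding S_def using m2 by auto
    have "P dvd x^2 - x'^2" using \<open>f x = f x'\<close> unfolding f_def by (simp only: mod_eq_dvd_iff)
    moreover have "x^2 - x'^2 = (x - x') * (x + x')" by (simp add: power2_eq_square algebra_simps)
    ultimately have "P dvd (x - x') * (x + x')" by simp
    note this b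
    then show "x = x'" using sq_inj_aux pP by blast
  qed
  have injg: "inj_on g S"
  proof (rule inj_onI)
    fix x x' assume "x \<in> S" "x' \<in> S" "g x = g x'"
    then have b: "0 \<le> x" "0 \<le> x'" "2*x < P" "2 * x' < P"
      unfolding S_def using m2 by auto
    have "P dvd (-1 - x^2) - (-1 - x'^2)" using \<open>g x = g x'\<close> unfolding g_def by (simp only: mod_eq_dvd_iff)
    moreover have "(-1 - x^2) - (-1 - x'^2) = (x' - x) * (x' + x)" by (simp add: power2_eq_square algebra_simps)
    ultimately have "P dvd (x' - x) * (x' + x)" by simp
    note this b
    then show "x = x'" using sq_inj_aux[of P x' x] pP by auto
  qed
  have cS: "card S = nat (m + 1)" by (simp add: S_def)
  have sub: "f ` S \<union> g ` S \<subseteq> {0..<P}" using P2 unfolding f_def g_def by auto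
  have "\<not> (f ` S \<inter> g ` S = {})"
  proof
    assume d: "f ` S \<inter> g ` S = {}"
    have "card (f ` S \<union> g ` S) = card (f ` S) + card (g ` S)"
      using d by (intro card_Un_disjoint) (auto simp: S_def)
    also have "\<dots> = 2 * nat (m + 1)" using card_image[OF injf] card_image[OF injg] cS by simp
    finally have "card (f ` S \<union> g ` S) = 2 * nat (m + 1)" .
    moreover have "card (f ` S \<union> g ` S) \<le> card {0..<P}" by (rule card_mono[OF _ sub]) simp
    ultimately show False using m2 P2 by simp
  qed
  then obtain x y where "x \<in> S" "y \<in> S" "f x = g y" by auto
  then have "P dvd x^2 - (-1 - y^2)" unfolding f_def g_def by (simp only: mod_eq_dvd_iff)
  moreover have "x^2 - (-1 - y^2) = x^2 + y^2 + 1" by simp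
  ultimately show ?thesis unfolding P_def by metis
qed



lemma not_p_mult:
  assumes "prime p" "\<beta> \<in> H122" "Im2 (qreal (real p) * \<beta>) = e * sqrt 2 / 2" "\<bar>e\<bar> = 1"
  shows False
proof -
  obtain c :: int where c: "Im2 \<beta> = c * sqrt 2 / 2" using H_Im2[OF assms(2)] by blast
  have "real p * (c * sqrt 2 / 2) = e * sqrt 2 / 2" using assms(3) c by simp
  then have "real p * c = e" by simp
  then have "real_of_int \<bar>int p * c\<bar> = 1" using assms(4) by simp
  then have "\<bar>int p * c\<bar> = 1" by (simp only: of_int_eq_1_iff)
  moreover have "int p dvd \<bar>int p * c\<bar>" by simp
  ultimately have "int p dvd 1" by simp
  then have "p dvd 1" by (metis int_dvd_int_iff of_nat_1)
  then show False using assms(1) by simp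
qed

lemma exists_norm_p:
  fixes p :: nat
  assumes "prime p"
  shows "\<exists>\<delta>\<in>H122. nr \<delta> = real p"
proof (cases "p = 2")
  case True
  have "nr (qlin 1 1 0 0) = 2" by (simp add: nr_qlin)
  moreover have "qlin 1 1 0 0 \<in> H122" by (auto simp: H_iff)
  ultimately show ?thesis using True by auto
next
  case False
  have "p > 2" using prime_ge_2_nat[OF assms] False by linarith
  then have op: "odd p" using assms prime_odd_nat by simp
  obtain X Y :: int where "int p dvd X^2 + Y^2 + 1" using pigeon[OF assms op] by blast
  then obtain k where k: "X^2 + Y^2 + 1 = int p * k" by blast
  define \<alpha> where "\<alpha> = qlin (X - 1) (Y - 1) 1 1"
  have \<alpha>H: "\<alpha> \<in> H122" unfolding \<alpha>_def by (auto simp: H_iff)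
  have nra: "nr \<alpha> = of_int (X^2 + Y^2 + 1)" unfolding \<alpha>_def nr_qlin
    by (simp add: power2_eq_square algebra_simps)
  define P where "P = qreal (real p)"
  have PH: "P \<in> H122" unfolding P_def using H_int[of "int p"] by simp
  have nrP: "nr P = real p ^ 2" unfolding P_def by (simp add: nr_qreal)
  have im2a: "Im2 \<alpha> = 1 * sqrt 2 / 2" by (simp add: \<alpha>_def qlin_eq)
  have im2ca: "Im2 (qconj \<alpha>) = (-1) * sqrt 2 / 2" by (simp add: \<alpha>_def qlin_eq)
  define Pn where "Pn n \<longleftrightarrow> (\<exists>\<xi>\<in>H122. \<exists>\<eta>\<in>H122. \<xi> * P + \<eta> * \<alpha> \<noteq> 0 \<and> nr (\<xi> * P + \<eta> * \<alpha>) = real n)" for n :: nat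
  have "Pn (p^2)" unfolding Pn_def
  proof (intro bexI conjI)
    show "1 * P + 0 * \<alpha> \<noteq> 0" using nrP assms nr_zero[of P] by (auto simp: prime_gt_0_nat)
    show "nr (1 * P + 0 * \<alpha>) = real (p^2)" using nrP by simp
  qed (use H_0 H_1 in auto)
  then have ex: "\<exists>n. Pn n" by blast
  define n0 where "n0 = (LEAST n. Pn n)"
  have Pn0: "Pn n0" unfolding n0_def using LeastI_ex[OF ex] .
  have minl: "\<And>n. n < n0 \<Longrightarrow> \<not> Pn n" unfolding n0_def using not_less_Least by blast
  obtain \<xi>0 \<eta>0 where x0: "\<xi>0 \<in> H122" "\<eta>0 \<in> H122" and
    d0: "\<xi>0 * P + \<eta>0 * \<alpha> \<noteq> 0" "nr (\<xi>0 * P + \<eta>0 * \<alpha>) = real n0"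
    using Pn0 unfolding Pn_def by blast
  define \<delta> where "\<delta> = \<xi>0 * P + \<eta>0 * \<alpha>"
  have \<delta>H: "\<delta> \<in> H122" unfolding \<delta>_def using x0 PH \<alpha>H by (intro H_add H_mult)
  have \<delta>0: "\<delta> \<noteq> 0" using d0 \<delta>_def by simp
  have nd0: "nr \<delta> = real n0" using d0 \<delta>_def by simp
  have gen: "\<exists>q\<in>H122. \<xi> * P + \<eta> * \<alpha> = q * \<delta>" if "\<xi> \<in> H122" "\<eta> \<in> H122" for \<xi> \<eta>
  proof -
    have gH: "\<xi> * P + \<eta> * \<alpha> \<in> H122" using that PH \<alpha>H by (intro H_add H_mult)
    obtain q where q: "q \<in> H122" "nr (\<xi> * P + \<eta> * \<alpha> - q * \<delta>) < nr \<delta>"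
      using division[OF gH \<delta>H \<delta>0] by blast
    have eq: "\<xi> * P + \<eta> * \<alpha> - q * \<delta> = (\<xi> - q * \<xi>0) * P + (\<eta> - q * \<eta>0) * \<alpha>"
      unfolding \<delta>_def by (simp add: algebra_simps)
    have H1: "\<xi> - q * \<xi>0 \<in> H122" "\<eta> - q * \<eta>0 \<in> H122" using that q x0 by (auto intro: H_diff H_mult)
    have "\<xi> * P + \<eta> * \<alpha> - q * \<delta> = 0"
    proof (rule ccontr)
      assume ne: "\<xi> * P + \<eta> * \<alpha> - q * \<delta> \<noteq> 0"
      obtain n :: nat where n: "nr (\<xi> * P + \<eta> * \<alpha> - q * \<delta>) = real n"
        using H_nr H_diff H_mult gH q(1) \<delta>H by blast
      have "n < n0" using n q(2) d0 \<delta>_def by simp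
      moreover have "Pn n" unfolding Pn_def using H1 ne n eq by metis
      ultimately show False using minl by blast
    qed
    then show ?thesis using q(1) by auto
  qed
  obtain u where u: "u \<in> H122" "P = u * \<delta>" using gen[of 1 0] H_0 H_1 by auto
  obtain w where w: "w \<in> H122" "\<alpha> = w * \<delta>" using gen[of 0 1] H_0 H_1 by auto
  obtain nu :: nat where nu: "nr u = real nu" using H_nr u(1) by blast
  have "real (p^2) = real nu * real n0" using u(2) nrP nr_mult[of u \<delta>] nu d0 \<delta>_def by simp
  then have "p^2 = nu * n0" by (metis of_nat_eq_iff of_nat_mult)
  then have "n0 dvd p^2" by simp
  then obtain i where i: "i \<le> 2" "n0 = p ^ i" using divides_primepow_nat[OF assms] by blast
  have "i = 0 \<or> i = 1 \<or> i = 2" using i by auto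
  moreover
  have False if "i = 0"
  proof -
    have nd: "nr \<delta> = 1" using i that d0 \<delta>_def by simp
    have "\<delta> * qconj \<alpha> = \<xi>0 * P * qconj \<alpha> + \<eta>0 * qreal (nr \<alpha>)"
      unfolding \<delta>_def by (simp add: algebra_simps mul_conj)
    also have "qreal (nr \<alpha>) = P * qreal (of_int k)"
    proof -
      have kr: "real_of_int X ^ 2 + real_of_int Y ^ 2 + 1 = real p * real_of_int k"
        using arg_cong[OF k, of real_of_int] by simp
      show ?thesis unfolding nra P_def by (simp add: qreal_mult[symmetric] kr)
    qed
    finally have E: "\<delta> * qconj \<alpha> = \<xi>0 * P * qconj \<alpha> + \<eta>0 * (P * qreal (of_int k))" .
    also have "\<dots> = P * (\<xi>0 * qconj \<alpha> + \<eta>0 * qreal (of_int k))"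
      unfolding P_def by (simp only: distrib_left qreal_left qreal_left2)
    finally have E2: "\<delta> * qconj \<alpha> = P * (\<xi>0 * qconj \<alpha> + \<eta>0 * qreal (of_int k))" .
    have "qconj \<delta> * \<delta> * qconj \<alpha> = qconj \<delta> * (\<delta> * qconj \<alpha>)" by (simp only: mult.assoc)
    also have "\<dots> = qconj \<delta> * (P * (\<xi>0 * qconj \<alpha> + \<eta>0 * qreal (of_int k)))" by (simp only: E2)
    also have "\<dots> = P * (qconj \<delta> * (\<xi>0 * qconj \<alpha> + \<eta>0 * qreal (of_int k)))"
      unfolding P_def by (rule qreal_left)
    finally have "qconj \<delta> * \<delta> * qconj \<alpha> = P * (qconj \<delta> * (\<xi>0 * qconj \<alpha> + \<eta>0 * qreal (of_int k)))" .
    then have ca: "qconj \<alpha> = P * (qconj \<delta> * (\<xi>0 * qconj \<alpha> + \<eta>0 * qreal (of_int k)))"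
      using nd by (simp add: conj_mul qreal_1)
    define R where "R = qconj \<delta> * (\<xi>0 * qconj \<alpha> + \<eta>0 * qreal (of_int k))"
    have RH: "R \<in> H122"
      unfolding R_def using \<delta>H x0 \<alpha>H by (intro H_mult H_add H_conj H_int)
    have ca2: "qconj \<alpha> = qreal (real p) * R" using ca unfolding R_def P_def .
    have A: "Im2 (qconj \<alpha>) = Im2 (qreal (real p) * R)" using ca2 by (rule arg_cong)
    have X: "Im2 (qreal (real p) * R) = (-1) * sqrt 2 / 2" by (rule HOL.trans[OF HOL.sym[OF A] im2ca])
    show False using not_p_mult[OF assms RH X] by simp
  qed
  moreover
  have False if "i = 2"
  proof -
    have "nu = 1" using \<open>p^2 = nu * n0\<close> i that assms by (simp add: prime_gt_0_nat)
    then have "u * qconj u = 1" "qconj u * u = 1" using nu by (simp_all add: mul_conj conj_mul qreal_1)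
    then have "\<delta> = qconj u * P" using u(2) by (simp add: mult.assoc[symmetric])
    then have "\<alpha> = w * qconj u * P" using w(2) by (simp add: mult.assoc)
    then have a2: "\<alpha> = qreal (real p) * (w * qconj u)" unfolding P_def by (simp only: qreal_comm)
    have WH: "w * qconj u \<in> H122" using w u by (intro H_mult H_conj)
    have A: "Im2 \<alpha> = Im2 (qreal (real p) * (w * qconj u))" using a2 by (rule arg_cong)
    have X: "Im2 (qreal (real p) * (w * qconj u)) = 1 * sqrt 2 / 2" by (rule HOL.trans[OF HOL.sym[OF A] im2a])
    show False using not_p_mult[OF assms WH X] by simp
  qed
  ultimately have "i = 1" by blast
  then show ?thesis using \<delta>H d0 \<delta>_def i by auto
qed



lemma nr_conj: "nr (qconj q) = nr q" by (simp add: nr_def)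

theorem lemma42:
  fixes \<pi> :: quat and p :: nat
  assumes "H_prime \<pi>" and "prime p"
  shows "((\<exists>a\<in>H122. qreal (real p) = \<pi> \<star> a \<or> qreal (real p) = a \<star> \<pi>)
            \<longleftrightarrow> qN \<pi> = qreal (real p))
         \<and> (qN \<pi> = qreal (real p) \<longrightarrow>
              (\<exists>a\<in>H122. qreal (real p) = \<pi> \<star> a) \<and> (\<exists>a\<in>H122. qreal (real p) = a \<star> \<pi>))"
proof -
  define P where "P = qreal (real p)"
  have piH: "\<pi> \<in> H122" and pi0: "\<pi> \<noteq> 0" and pinu: "\<not> H_unit \<pi>"
    and pipr: "\<And>a b. a \<in> H122 \<Longrightarrow> b \<in> H122 \<Longrightarrow> \<pi> = a * b \<Longrightarrow> H_unit a \<or> H_unit b"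
    using assms(1) unfolding H_prime_def by (auto simp: qmul_eq qreal_0)
  have nrP: "nr P = real p ^ 2" unfolding P_def by (simp add: nr_qreal)
  have hback: "(\<exists>a\<in>H122. P = \<pi> * a) \<and> (\<exists>a\<in>H122. P = a * \<pi>)" if "qN \<pi> = P"
  proof -
    have "nr \<pi> = real p" using that unfolding qN_eq P_def qreal_inj .
    then have "P = \<pi> * qconj \<pi>" "P = qconj \<pi> * \<pi>" unfolding P_def by (simp_all add: mul_conj conj_mul)
    then show ?thesis using H_conj[OF piH] by blast
  qed
  have fwd: "qN \<pi> = P" if ex: "\<exists>a\<in>H122. P = \<pi> * a \<or> P = a * \<pi>"
  proof -
    obtain a where a: "a \<in> H122" "P = \<pi> * a \<or> P = a * \<pi>" using ex by blast
    have nrm: "nr P = nr \<pi> * nr a" using a(2) nr_mult[of \<pi> a] nr_mult[of a \<pi>] by (auto simp: mult.commute)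
    obtain n1 n2 :: nat where n: "nr \<pi> = real n1" "nr a = real n2" using H_nr piH a(1) by metis
    have "real (p^2) = real n1 * real n2" using nrm nrP n by simp
    then have pn: "p^2 = n1 * n2" by (metis of_nat_eq_iff of_nat_mult)
    then have "n1 dvd p^2" by simp
    then obtain i where i: "i \<le> 2" "n1 = p ^ i" using divides_primepow_nat[OF assms(2)] by blast
    have "i = 0 \<or> i = 1 \<or> i = 2" using i by auto
    moreover have False if "i = 0"
      using nr_unit[OF piH] pinu n i that by simp
    moreover have False if "i = 2"
    proof -
      have "n2 = 1" using pn i that assms(2) by (simp add: prime_gt_0_nat)
      then have au: "a * qconj a = 1" "qconj a * a = 1" using n by (simp_all add: mul_conj conj_mul qreal_1)
      have pieq: "\<pi> = P * qconj a"
        using a(2)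
      proof
        assume "P = \<pi> * a"
        then have "P * qconj a = \<pi> * (a * qconj a)" by (simp add: mult.assoc)
        then show ?thesis using au by simp
      next
        assume "P = a * \<pi>"
        then have "qconj a * P = (qconj a * a) * \<pi>" by (simp add: mult.assoc)
        then have "qconj a * P = \<pi>" using au by simp
        then show ?thesis unfolding P_def by (simp only: qreal_comm)
      qed
      obtain \<delta> where d: "\<delta> \<in> H122" "nr \<delta> = real p" using exists_norm_p[OF assms(2)] by blast
      have "P = \<delta> * qconj \<delta>" using d by (simp add: P_def mul_conj)
      then have "\<pi> = \<delta> * (qconj \<delta> * qconj a)" using pieq by (simp add: mult.assoc)
      moreover have "qconj \<delta> * qconj a \<in> H122" using d a by (intro H_mult H_conj)
      ultimately have "H_unit \<delta> \<or> H_unit (qconj \<delta> * qconj a)" using pipr d(1) by blast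
      moreover have "nr (qconj \<delta> * qconj a) = real p"
        using d n \<open>n2 = 1\<close> by (simp add: nr_mult nr_conj)
      ultimately have "real p = 1" using unit_nr d by metis
      then show False using assms(2) by (simp add: prime_gt_1_nat)
    qed
    ultimately have "i = 1" by blast
    then show ?thesis using n i by (simp add: qN_eq P_def)
  qed
  show ?thesis using hback fwd unfolding P_def[symmetric] qmul_eq by blast
qed

end
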